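(* Let $r\ge 1$, let $M=(v_1,\dots,v_n)$ be a finite list of nonzero vectors generating $\mathbb{F}_2^r$, and let $G=G(\mathbb{F}_2^r,M)$. Let $c_1(G)$ be the largest invariant factor (the exponent) of the sandpile group $K(G)$. Then $$c_1(G)\ \Big|\ 2^{r-2}\operatorname{lcm}\{\lambda_u : u\in\mathbb{F}_2^r\setminus\{0\}\},$$ where $\lambda_u=n-\sum_{i=1}^n(-1)^{u\cdot v_i}$.
   Context: The Cayley graph $G$ has vertex set $\mathbb{F}_2^r$ and Laplacian $L(G)$ indexed by $\mathbb{F}_2^r$ with $L(G)_{u,u}=n$ and $L(G)_{u,w}=-\#\{i:u+v_i=w\}$ for $u\ne w$; $\operatorname{coker}L(G)\cong\mathbb{Z}\oplus K(G)$ with $K(G)$ finite abelian (the sandpile group). The numbers $\lambda_u$, $u\in\mathbb{F}_2^r$, are the eigenvalues of $L(G)$ (with eigenvector $\sum_{w}(-1)^{u\cdot w}e_w$); $\lambda_0=0$ and $\lambda_u=2\#\{i: u\cdot v_i=1\}>0$ for $u\neq0$, so the right-hand side is an integer. *)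

theory Defs
  imports Main
begin

text \<open>Vectors of F_2^r are modelled as functions nat => bool vanishing (False) at indices >= r.\<close>

definition f2vecs :: "nat \<Rightarrow> (nat \<Rightarrow> bool) set" where
  "f2vecs r = {v. \<forall>i. r \<le> i \<longrightarrow> \<not> v i}"

definition f2zero :: "nat \<Rightarrow> bool" where
  "f2zero = (\<lambda>_. False)"

definition f2add :: "(nat \<Rightarrow> bool) \<Rightarrow> (nat \<Rightarrow> bool) \<Rightarrow> (nat \<Rightarrow> bool)" where
  "f2add u w = (\<lambda>i. u i \<noteq> w i)"

definition f2dot :: "nat \<Rightarrow> (nat \<Rightarrow> bool) \<Rightarrow> (nat \<Rightarrow> bool) \<Rightarrow> bool" where
  "f2dot r u w = odd (card {i. i < r \<and> u i \<and> w i})"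

definition f2sum :: "(nat \<Rightarrow> bool) list \<Rightarrow> nat set \<Rightarrow> (nat \<Rightarrow> bool)" where
  "f2sum M S = (\<lambda>j. odd (card {i \<in> S. (M ! i) j}))"

definition f2generates :: "nat \<Rightarrow> (nat \<Rightarrow> bool) list \<Rightarrow> bool" where
  "f2generates r M \<longleftrightarrow> (\<forall>w \<in> f2vecs r. \<exists>S \<subseteq> {..<length M}. w = f2sum M S)"

text \<open>Laplacian of the Cayley graph G(F_2^r, M).\<close>
definition cay_lap :: "(nat \<Rightarrow> bool) list \<Rightarrow> (nat \<Rightarrow> bool) \<Rightarrow> (nat \<Rightarrow> bool) \<Rightarrow> int" where
  "cay_lap M u w =
     (if u = w then int (length M)
      else - int (card {i. i < length M \<and> f2add u (M ! i) = w}))"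

definition in_lap_image :: "nat \<Rightarrow> (nat \<Rightarrow> bool) list \<Rightarrow> ((nat \<Rightarrow> bool) \<Rightarrow> int) \<Rightarrow> bool" where
  "in_lap_image r M x \<longleftrightarrow>
     (\<exists>g. \<forall>u \<in> f2vecs r. x u = (\<Sum>w \<in> f2vecs r. cay_lap M u w * g w))"

text \<open>x represents an element of the torsion subgroup K(G) of coker L(G).\<close>
definition sandpile_elem :: "nat \<Rightarrow> (nat \<Rightarrow> bool) list \<Rightarrow> ((nat \<Rightarrow> bool) \<Rightarrow> int) \<Rightarrow> bool" where
  "sandpile_elem r M x \<longleftrightarrow> (\<exists>k::int. k > 0 \<and> in_lap_image r M (\<lambda>u. k * x u))"

definition sandpile_exponent :: "nat \<Rightarrow> (nat \<Rightarrow> bool) list \<Rightarrow> nat" where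
  "sandpile_exponent r M =
     (LEAST m::nat. m > 0 \<and>
        (\<forall>x. sandpile_elem r M x \<longrightarrow> in_lap_image r M (\<lambda>u. int m * x u)))"

definition cay_eig :: "nat \<Rightarrow> (nat \<Rightarrow> bool) list \<Rightarrow> (nat \<Rightarrow> bool) \<Rightarrow> int" where
  "cay_eig r M u =
     int (length M) - (\<Sum>i<length M. if f2dot r u (M ! i) then -1 else 1)"

end

theory Submission
  imports Defs
begin

definition chi :: "nat \<Rightarrow> (nat \<Rightarrow> bool) \<Rightarrow> (nat \<Rightarrow> bool) \<Rightarrow> int" where
  "chi r u w = (\<Prod>i<r. if u i \<and> w i then -1 else 1)"

lemma chi_dot: "chi r u w = (if f2dot r u w then -1 else 1)"
proof -
  have "chi r u w = (\<Prod>i\<in>{..<r} \<inter> {i. u i \<and> w i}. (-1::int)) * (\<Prod>i\<in>{..<r} \<inter> - {i. u i \<and> w i}. 1)"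
    unfolding chi_def by (rule prod.If_cases) simp
  also have "\<dots> = (-1) ^ card {i. i < r \<and> u i \<and> w i}"
    by (simp add: Int_def conj_commute)
  finally show ?thesis unfolding f2dot_def by simp
qed

lemma chi_add: "chi r u (f2add a b) = chi r u a * chi r u b"
  unfolding chi_def f2add_def prod.distrib[symmetric]
  by (rule prod.cong) auto

lemma chi_zero1: "chi r f2zero w = 1"
  unfolding chi_def f2zero_def by simp

lemma chi_zero2: "chi r u f2zero = 1"
  unfolding chi_def f2zero_def by simp

lemma chi_pm: "chi r u w = 1 \<or> chi r u w = -1"
  unfolding chi_dot by auto

lemma finite_V: "finite (f2vecs r)"
proof -
  have "inj_on (\<lambda>v. {i. v i}) (f2vecs r)"
    unfolding inj_on_def f2vecs_def by auto
  moreover have "(\<lambda>v. {i. v i}) ` f2vecs r \<subseteq> Pow {..<r}"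
    unfolding f2vecs_def by auto (meson not_le)
  ultimately show ?thesis
    by (meson finite_Pow_iff finite_imageD finite_lessThan finite_subset)
qed

lemma card_V: "card (f2vecs r) = 2 ^ r"
proof -
  have "bij_betw (\<lambda>v. {i. v i}) (f2vecs r) (Pow {..<r})"
    unfolding bij_betw_def
  proof
    show "inj_on (\<lambda>v. {i. v i}) (f2vecs r)"
      unfolding inj_on_def f2vecs_def by auto
    show "(\<lambda>v. {i. v i}) ` f2vecs r = Pow {..<r}"
    proof
      show "(\<lambda>v. {i. v i}) ` f2vecs r \<subseteq> Pow {..<r}"
        unfolding f2vecs_def by auto (meson not_le)
      show "Pow {..<r} \<subseteq> (\<lambda>v. {i. v i}) ` f2vecs r"
      proof
        fix S assume "S \<in> Pow {..<r}"
        then have "(\<lambda>i. i \<in> S) \<in> f2vecs r" "S = {i. (\<lambda>i. i \<in> S) i}"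
          unfolding f2vecs_def by auto
        then show "S \<in> (\<lambda>v. {i. v i}) ` f2vecs r" by blast
      qed
    qed
  qed
  then have "card (f2vecs r) = card (Pow {..<r::nat})" by (rule bij_betw_same_card)
  then show ?thesis by (simp add: card_Pow)
qed

lemma add_V: "a \<in> f2vecs r \<Longrightarrow> b \<in> f2vecs r \<Longrightarrow> f2add a b \<in> f2vecs r"
  unfolding f2vecs_def f2add_def by auto

lemma add_zero_iff: "f2add a b = f2zero \<longleftrightarrow> a = b"
  unfolding f2add_def f2zero_def by (auto simp: fun_eq_iff)

lemma add_invol: "f2add (f2add a b) b = a"
  unfolding f2add_def by (auto simp: fun_eq_iff)

lemma zero_V: "f2zero \<in> f2vecs r"
  unfolding f2vecs_def f2zero_def by auto

lemma bij_add: "b \<in> f2vecs r \<Longrightarrow> bij_betw (\<lambda>a. f2add a b) (f2vecs r) (f2vecs r)"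
  by (rule bij_betw_byWitness[where f'="\<lambda>a. f2add a b"]) (auto simp: add_invol add_V)

lemma sum_chi_nonzero:
  assumes w: "w \<in> f2vecs r" "w \<noteq> f2zero"
  shows "(\<Sum>u\<in>f2vecs r. chi r u w) = 0"
proof -
  obtain i0 where i0: "w i0" using w(2) unfolding f2zero_def by auto
  then have i0r: "i0 < r" using w(1) unfolding f2vecs_def by (cases "i0 < r") auto
  define \<phi> where "\<phi> u = u(i0 := \<not> u i0)" for u :: "nat \<Rightarrow> bool"
  have bij: "bij_betw \<phi> (f2vecs r) (f2vecs r)"
    by (rule bij_betw_byWitness[where f'=\<phi>]) (use i0r in \<open>auto simp: \<phi>_def f2vecs_def fun_upd_def\<close>)
  have flip: "chi r (\<phi> u) w = - chi r u w" for u
  proof -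
    have "chi r (\<phi> u) w = (if \<phi> u i0 \<and> w i0 then -1 else 1) * (\<Prod>i\<in>{..<r} - {i0}. if \<phi> u i \<and> w i then -1 else 1)"
      unfolding chi_def using i0r by (simp add: prod.remove)
    also have "(\<Prod>i\<in>{..<r} - {i0}. if \<phi> u i \<and> w i then -1 else 1) = (\<Prod>i\<in>{..<r} - {i0}. if u i \<and> w i then (-1::int) else 1)"
      by (rule prod.cong) (auto simp: \<phi>_def)
    also have "chi r u w = (if u i0 \<and> w i0 then -1 else 1) * (\<Prod>i\<in>{..<r} - {i0}. if u i \<and> w i then -1 else 1)"
      unfolding chi_def using i0r by (simp add: prod.remove)
    moreover have "\<phi> u i0 = (\<not> u i0)" by (simp add: \<phi>_def)
    ultimately show ?thesis using i0 by (cases "u i0") simp_all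
  qed
  have "(\<Sum>u\<in>f2vecs r. chi r u w) = (\<Sum>u\<in>f2vecs r. chi r (\<phi> u) w)"
    using sum.reindex_bij_betw[OF bij, of "\<lambda>u. chi r u w"] by simp
  also have "\<dots> = - (\<Sum>u\<in>f2vecs r. chi r u w)" by (simp add: flip sum_negf)
  finally show ?thesis by simp
qed

lemma sum_chi: "w \<in> f2vecs r \<Longrightarrow> (\<Sum>u\<in>f2vecs r. chi r u w) = (if w = f2zero then 2 ^ r else 0)"
  using sum_chi_nonzero[of w r] by (simp add: chi_zero2 card_V)


lemma lap_apply:
  assumes M: "set M \<subseteq> f2vecs r" "\<forall>v \<in> set M. v \<noteq> f2zero" and a: "a \<in> f2vecs r"
  shows "(\<Sum>w\<in>f2vecs r. cay_lap M a w * g w) =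
           int (length M) * g a - (\<Sum>i<length M. g (f2add a (M ! i)))"
proof -
  let ?V = "f2vecs r" and ?n = "length M"
  have Vi: "f2add a (M ! i) \<in> ?V - {a}" if "i < ?n" for i
  proof -
    have "M ! i \<in> set M" using that by simp
    then have "M ! i \<in> ?V" "M ! i \<noteq> f2zero" using M by auto
    moreover have "f2add a (M ! i) \<noteq> a"
    proof
      assume "f2add a (M ! i) = a"
      then have "M ! i = f2zero" unfolding f2add_def f2zero_def by (auto simp: fun_eq_iff)
      then show False using \<open>M ! i \<noteq> f2zero\<close> by blast
    qed
    ultimately show ?thesis using add_V a by blast
  qed
  have "(\<Sum>w\<in>?V. cay_lap M a w * g w) = cay_lap M a a * g a + (\<Sum>w\<in>?V - {a}. cay_lap M a w * g w)"
    by (rule sum.remove[OF finite_V a])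
  also have "(\<Sum>w\<in>?V - {a}. cay_lap M a w * g w) =
      (\<Sum>w\<in>?V - {a}. - (\<Sum>i<?n. if f2add a (M ! i) = w then g w else 0))"
  proof (rule sum.cong)
    fix w assume "w \<in> ?V - {a}"
    then have "cay_lap M a w = - int (card {i \<in> {..<?n}. f2add a (M ! i) = w})"
      unfolding cay_lap_def by auto
    moreover have "int (card {i \<in> {..<?n}. f2add a (M ! i) = w}) * g w = (\<Sum>i<?n. if f2add a (M ! i) = w then g w else 0)"
      by (simp add: sum.inter_filter[symmetric])
    ultimately show "cay_lap M a w * g w = - (\<Sum>i<?n. if f2add a (M ! i) = w then g w else 0)"
      by simp
  qed simp
  also have "\<dots> = - (\<Sum>i<?n. \<Sum>w\<in>?V - {a}. if f2add a (M ! i) = w then g w else 0)"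
    by (simp add: sum_negf sum.swap[of _ "?V - {a}"])
  also have "\<dots> = - (\<Sum>i<?n. g (f2add a (M ! i)))"
    using Vi finite_V by (simp add: sum.delta)
  finally show ?thesis unfolding cay_lap_def by simp
qed

lemma eig_chi: "cay_eig r M u = int (length M) - (\<Sum>i<length M. chi r u (M ! i))"
  unfolding cay_eig_def chi_dot by simp

lemma lap_chi:
  assumes M: "set M \<subseteq> f2vecs r" "\<forall>v \<in> set M. v \<noteq> f2zero" and a: "a \<in> f2vecs r"
  shows "int (length M) * chi r u a - (\<Sum>i<length M. chi r u (f2add a (M ! i))) = cay_eig r M u * chi r u a"
  unfolding eig_chi chi_add by (simp add: algebra_simps sum_distrib_left)


lemma sum_shift:
  assumes "b \<in> f2vecs r"
  shows "(\<Sum>a\<in>f2vecs r. g (f2add a b)) = (\<Sum>a\<in>f2vecs r. (g a :: int))"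
  using sum.reindex_bij_betw[OF bij_add[OF assms], of g] by simp

lemma sandpile_sum:
  assumes M: "set M \<subseteq> f2vecs r" "\<forall>v \<in> set M. v \<noteq> f2zero" and x: "sandpile_elem r M x"
  shows "(\<Sum>a\<in>f2vecs r. x a) = 0"
proof -
  obtain k g where k: "k > 0" and kg: "\<forall>u\<in>f2vecs r. k * x u = (\<Sum>w\<in>f2vecs r. cay_lap M u w * g w)"
    using x unfolding sandpile_elem_def in_lap_image_def by auto
  have Mi: "M ! i \<in> f2vecs r" if "i < length M" for i
    using M that nth_mem by blast
  have "k * (\<Sum>a\<in>f2vecs r. x a) = (\<Sum>a\<in>f2vecs r. k * x a)" by (simp add: sum_distrib_left)
  also have "\<dots> = (\<Sum>a\<in>f2vecs r. int (length M) * g a - (\<Sum>i<length M. g (f2add a (M ! i))))"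
    by (rule sum.cong) (use kg lap_apply[OF M] in auto)
  also have "\<dots> = int (length M) * (\<Sum>a\<in>f2vecs r. g a) - (\<Sum>i<length M. \<Sum>a\<in>f2vecs r. g (f2add a (M ! i)))"
    by (simp add: sum_subtractf sum_distrib_left sum.swap[of _ "f2vecs r"])
  also have "(\<Sum>i<length M. \<Sum>a\<in>f2vecs r. g (f2add a (M ! i))) = (\<Sum>i<length M. \<Sum>a\<in>f2vecs r. g a)"
    by (rule sum.cong) (auto simp: sum_shift Mi)
  finally have "k * (\<Sum>a\<in>f2vecs r. x a) = 0" by simp
  then show ?thesis using k by simp
qed

lemma chi_even: "2 dvd (chi r u w - 1)"
  using chi_pm[of r u w] by auto

lemma chi_minus1: "2 dvd t \<Longrightarrow> 4 dvd (chi r u w - 1) * t"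
  using chi_pm[of r u w] by (auto simp: mult_dvd_mono)

lemma key:
  assumes M: "set M \<subseteq> f2vecs r" "\<forall>v \<in> set M. v \<noteq> f2zero"
    and dv: "\<forall>u\<in>f2vecs r - {f2zero}. cay_eig r M u dvd m"
    and m4: "4 dvd 2 ^ r * m"
    and x: "sandpile_elem r M x"
  shows "in_lap_image r M (\<lambda>u. (2 ^ r * m div 4) * x u)"
proof -
  let ?V = "f2vecs r" and ?n = "length M"
  have Mi: "M ! i \<in> f2vecs r" if "i < length M" for i
    using M that nth_mem by blast
  have sx: "(\<Sum>v\<in>?V. x v) = 0" by (rule sandpile_sum[OF M x])
  define y where "y u = (\<Sum>v\<in>?V. chi r u v * x v)" for u
  define E where "E u = (if u = f2zero then 0 else m div cay_eig r M u)" for u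
  define z where "z w = (\<Sum>u\<in>?V. chi r u w * (E u * y u))" for w
  define c where "c = z f2zero"
  define g where "g w = (z w - c) div 4" for w
  have y_even: "2 dvd y u" for u
  proof -
    have "y u = (\<Sum>v\<in>?V. (chi r u v - 1) * x v) + (\<Sum>v\<in>?V. x v)"
      by (simp add: y_def algebra_simps sum.distrib[symmetric])
    also have "\<dots> = (\<Sum>v\<in>?V. (chi r u v - 1) * x v)" using sx by simp
    also have "2 dvd \<dots>"
      by (rule dvd_sum, rule dvd_mult2, rule chi_even)
    finally show ?thesis .
  qed
  have z4: "4 dvd z w - c" for w
  proof -
    have "z w - c = (\<Sum>u\<in>?V. (chi r u w - 1) * (E u * y u))"
      by (simp add: z_def c_def chi_zero2 algebra_simps sum_subtractf)
    then show ?thesis using y_even by (auto intro!: dvd_sum chi_minus1)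
  qed
  have g4: "4 * g w = z w - c" for w using z4[of w] by (simp add: g_def)
  have y0: "y f2zero = 0" using sx by (simp add: y_def chi_zero1)
  have inv: "(\<Sum>u\<in>?V. chi r u a * y u) = 2 ^ r * x a" if a: "a \<in> ?V" for a
  proof -
    have "(\<Sum>u\<in>?V. chi r u a * y u) = (\<Sum>u\<in>?V. \<Sum>v\<in>?V. chi r u (f2add a v) * x v)"
      unfolding y_def sum_distrib_left chi_add by (simp add: mult.assoc)
    also have "\<dots> = (\<Sum>v\<in>?V. (\<Sum>u\<in>?V. chi r u (f2add a v)) * x v)"
      by (subst sum.swap) (simp add: sum_distrib_right)
    also have "\<dots> = (\<Sum>v\<in>?V. if v = a then 2 ^ r * x a else 0)"
    proof (rule sum.cong)
      fix v assume v: "v \<in> ?V"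
      have "(\<Sum>u\<in>?V. chi r u (f2add a v)) = (if f2add a v = f2zero then 2 ^ r else 0)"
        by (rule sum_chi[OF add_V[OF a v]])
      then show "(\<Sum>u\<in>?V. chi r u (f2add a v)) * x v = (if v = a then 2 ^ r * x a else 0)"
        by (auto simp: add_zero_iff)
    qed simp
    also have "\<dots> = 2 ^ r * x a" using a finite_V by simp
    finally show ?thesis .
  qed
  have Lz: "int ?n * z a - (\<Sum>i<?n. z (f2add a (M ! i))) = 2 ^ r * m * x a" if a: "a \<in> ?V" for a
  proof -
    have "int ?n * z a - (\<Sum>i<?n. z (f2add a (M ! i))) =
        (\<Sum>u\<in>?V. (int ?n * chi r u a - (\<Sum>i<?n. chi r u (f2add a (M ! i)))) * (E u * y u))"
    proof -
      have h1: "int ?n * z a = (\<Sum>u\<in>?V. int ?n * chi r u a * (E u * y u))"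
        unfolding z_def by (simp add: sum_distrib_left mult.assoc)
      have h2: "(\<Sum>i<?n. z (f2add a (M ! i))) = (\<Sum>u\<in>?V. (\<Sum>i<?n. chi r u (f2add a (M ! i))) * (E u * y u))"
        unfolding z_def by (subst sum.swap) (simp add: sum_distrib_right)
      show ?thesis unfolding h1 h2 left_diff_distrib by (simp add: sum_subtractf)
    qed
    also have "\<dots> = (\<Sum>u\<in>?V. chi r u a * (cay_eig r M u * E u) * y u)"
      by (rule sum.cong) (simp_all add: lap_chi[OF M a])
    also have "\<dots> = (\<Sum>u\<in>?V. chi r u a * (if u = f2zero then 0 else m) * y u)"
      by (rule sum.cong) (use dv in \<open>auto simp: E_def\<close>)
    also have "\<dots> = m * (\<Sum>u\<in>?V. chi r u a * y u)"
      using y0 by (auto simp: sum_distrib_left intro!: sum.cong)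
    also have "\<dots> = 2 ^ r * m * x a" using inv[OF a] by simp
    finally show ?thesis .
  qed
  show ?thesis unfolding in_lap_image_def
  proof (intro exI ballI)
    fix a assume a: "a \<in> ?V"
    have "4 * (\<Sum>w\<in>?V. cay_lap M a w * g w) = 4 * (int ?n * g a - (\<Sum>i<?n. g (f2add a (M ! i))))"
      using lap_apply[OF M a] by simp
    also have "\<dots> = int ?n * (4 * g a) - (\<Sum>i<?n. 4 * g (f2add a (M ! i)))"
      by (simp add: right_diff_distrib sum_distrib_left mult.left_commute)
    also have "\<dots> = int ?n * (z a - c) - (\<Sum>i<?n. z (f2add a (M ! i)) - c)"
      by (simp only: g4)
    also have "\<dots> = int ?n * z a - (\<Sum>i<?n. z (f2add a (M ! i)))"
      by (simp add: sum_subtractf right_diff_distrib)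
    also have "\<dots> = 2 ^ r * m * x a" by (rule Lz[OF a])
    also have "\<dots> = 4 * ((2 ^ r * m div 4) * x a)" using m4 by simp
    finally show "(2 ^ r * m div 4) * x a = (\<Sum>w\<in>?V. cay_lap M a w * g w)" by simp
  qed
qed


lemma lap_comb:
  assumes "in_lap_image r M f" "in_lap_image r M h"
  shows "in_lap_image r M (\<lambda>u. a * f u + b * h u)"
proof -
  obtain g1 where g1: "\<forall>u\<in>f2vecs r. f u = (\<Sum>w\<in>f2vecs r. cay_lap M u w * g1 w)"
    using assms(1) unfolding in_lap_image_def by auto
  obtain g2 where g2: "\<forall>u\<in>f2vecs r. h u = (\<Sum>w\<in>f2vecs r. cay_lap M u w * g2 w)"
    using assms(2) unfolding in_lap_image_def by auto
  show ?thesis unfolding in_lap_image_def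
  proof (intro exI[of _ "\<lambda>w. a * g1 w + b * g2 w"] ballI)
    fix u assume u: "u \<in> f2vecs r"
    have "(\<Sum>w\<in>f2vecs r. cay_lap M u w * (a * g1 w + b * g2 w)) =
        a * (\<Sum>w\<in>f2vecs r. cay_lap M u w * g1 w) + b * (\<Sum>w\<in>f2vecs r. cay_lap M u w * g2 w)"
      by (simp add: sum.distrib sum_distrib_left distrib_left mult.left_commute)
    then show "a * f u + b * h u = (\<Sum>w\<in>f2vecs r. cay_lap M u w * (a * g1 w + b * g2 w))"
      using g1 g2 u by simp
  qed
qed

lemma exp_dvd:
  assumes N: "N > 0" and PN: "\<forall>x. sandpile_elem r M x \<longrightarrow> in_lap_image r M (\<lambda>u. int N * x u)"
  shows "sandpile_exponent r M dvd N"
proof -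
  define P where "P m \<longleftrightarrow> m > 0 \<and> (\<forall>x. sandpile_elem r M x \<longrightarrow> in_lap_image r M (\<lambda>u. int m * x u))" for m
  have e: "sandpile_exponent r M = (LEAST m. P m)" unfolding sandpile_exponent_def P_def ..
  have "P N" using N PN by (simp add: P_def)
  then have Pe: "P (Least P)" by (rule LeastI)
  let ?e = "Least P"
  let ?d = "gcd ?e N"
  have dpos: "?d > 0" using N by simp
  obtain a b where ab: "a * int ?e + b * int N = gcd (int ?e) (int N)" using bezout_int by blast
  have dint: "int ?d = a * int ?e + b * int N" using ab by simp
  have Pintro: "P m" if "m > 0" "\<forall>x. sandpile_elem r M x \<longrightarrow> in_lap_image r M (\<lambda>u. int m * x u)" for m
    using that by (simp add: P_def)
  have "P ?d"
  proof (rule Pintro[OF dpos], intro allI impI)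
    fix x assume x: "sandpile_elem r M x"
    have "in_lap_image r M (\<lambda>u. a * (int ?e * x u) + b * (int N * x u))"
      by (rule lap_comb) (use Pe PN x P_def in auto)
    moreover have "(\<lambda>u. a * (int ?e * x u) + b * (int N * x u)) = (\<lambda>u. int ?d * x u)"
      unfolding dint by (simp add: algebra_simps)
    ultimately show "in_lap_image r M (\<lambda>u. int ?d * x u)" by simp
  qed
  then have "?e \<le> ?d" by (rule Least_le)
  moreover have "?d \<le> ?e" using Pe unfolding P_def by (simp add: gcd_le1_nat)
  ultimately have "?e = ?d" by simp
  moreover have "?d dvd N" by (rule gcd_dvd2)
  ultimately show ?thesis unfolding e by simp
qed

lemma eig_even: "2 dvd cay_eig r M u"
proof -
  have "cay_eig r M u = (\<Sum>i<length M. - (chi r u (M ! i) - 1))"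
    unfolding eig_chi by (simp add: sum_subtractf sum_negf)
  also have "2 dvd \<dots>"
    by (rule dvd_sum) (simp only: dvd_minus_iff chi_even)
  finally show ?thesis .
qed

theorem mainTheorem6:
  fixes r :: nat and M :: "(nat \<Rightarrow> bool) list"
  assumes "r \<ge> 1"
    and "set M \<subseteq> f2vecs r"
    and "\<forall>v \<in> set M. v \<noteq> f2zero"
    and "f2generates r M"
  shows "2 * int (sandpile_exponent r M) dvd
           2 ^ (r - 1) * Lcm (cay_eig r M ` (f2vecs r - {f2zero}))"
proof -
  define m where "m = Lcm (cay_eig r M ` (f2vecs r - {f2zero}))"
  show ?thesis
  proof (cases "m = 0")
    case True
    then show ?thesis unfolding m_def by simp
  next
    case False
    have "m \<ge> 0" unfolding m_def by simp
    then have m0: "m > 0" using False by simp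
    have dv: "\<forall>u\<in>f2vecs r - {f2zero}. cay_eig r M u dvd m"
      unfolding m_def by (auto intro: dvd_Lcm)
    define e0 where "e0 = (\<lambda>i::nat. i = 0)"
    have e0V: "e0 \<in> f2vecs r - {f2zero}"
      using assms(1) unfolding e0_def f2vecs_def f2zero_def by (auto simp: fun_eq_iff)
    have "cay_eig r M e0 dvd m" using dv e0V by blast
    then have "2 dvd m" by (rule dvd_trans[OF eig_even])
    then obtain k where k: "m = 2 * k" by blast
    obtain s where s: "r = Suc s" using assms(1) by (cases r) auto
    have eq4: "2 ^ r * m = 4 * (2 ^ s * k)" using k s by simp
    have m4: "4 dvd 2 ^ r * m" using eq4 by simp
    have kpos: "k > 0" using m0 k by simp
    define N where "N = nat (2 ^ s * k)"
    have Nint: "int N = 2 ^ r * m div 4" unfolding N_def eq4 using kpos by simp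
    have Npos: "N > 0" unfolding N_def using kpos by simp
    have PN: "\<forall>x. sandpile_elem r M x \<longrightarrow> in_lap_image r M (\<lambda>u. int N * x u)"
      unfolding Nint using key[OF assms(2,3) dv m4] by blast
    have "sandpile_exponent r M dvd N" by (rule exp_dvd[OF Npos PN])
    then have "int (sandpile_exponent r M) dvd int N" by simp
    then have "2 * int (sandpile_exponent r M) dvd 2 * int N" by simp
    moreover have "2 * int N = 2 ^ (r - 1) * m" unfolding N_def using kpos k s by simp
    ultimately show ?thesis unfolding m_def by simp
  qed
qed

end
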